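(* Let $(F,\mathrm{Frob})=\prod_{p\in\mathbb{P}}(\mathbb{F}_{p^{k_p}},\mathrm{Frob}_p)/\mathcal{U}$ be a member of the class $\mathcal{S}$. Then the coarse pseudofinite dimension $\pmb{\delta}_F$ with respect to $F$ takes integer values on all $\mathcal{L}_\sigma$-definable sets (with parameters) of $(F,\mathrm{Frob})$.
   Context: $\mathbb{P}$ is the set of primes; $\mathrm{Frob}_p$ is the map $x\mapsto x^p$. $\mathcal{L}_\sigma$ is the language of rings expanded by a unary function symbol $\sigma$ (interpreted by $\mathrm{Frob}_p$, resp. $\mathrm{Frob}$). For an $\mathcal{L}_\sigma$-formula $\varphi(x,y)$ without parameters and a prime $p$, $\varphi_p(x,y)$ is the ring formula obtained by replacing each occurrence of $\sigma(t)$ by $t^p$. By the theorem of Chatzidakis–van den Dries–Macintyre, for every ring formula $\psi(x,y)$ with $|x|=n$ there are a constant $C_\psi>0$ and a finite set $D_\psi\subseteq\{0,\dots,n\}\times\mathbb{R}^{>0}$ such that for every finite field $\mathbb{F}_q$ and $a\in\mathbb{F}_q^{|y|}$ with $\psi(\mathbb{F}_q^n,a)\neq\emptyset$ there is $(d,\mu)\in D_\psi$ with $\big||\psi(\mathbb{F}_q^n,a)|-\mu q^d\big|\le C_\psi q^{d-1/2}$; fix such $C_\psi,D_\psi$ for each $\psi$, and let $E_\psi=\{\mu:(d,\mu)\in D_\psi\}$. Put $N^p_{\varphi}=\max\{\mu,1/\mu,2\log_p(2C_{\varphi_p}/\mu):\mu\in E_{\varphi_p}\}$ and $f(\ell,p)=\max\{N^p_\varphi:\varphi(x,y)\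 \mathcal{L}_\sigma\text{-formula without parameters},\ |\varphi|\le\ell\}$, where $|\varphi|$ is the length of $\varphi$. The class $\mathcal{S}$ consists of all ultraproducts $\prod_{p\in\mathbb{P}}(\mathbb{F}_{p^{k_p}},\mathrm{Frob}_p)/\mathcal{U}$ with $\mathcal{U}$ a non-principal ultrafilter on $\mathbb{P}$ and $k_p\ge f(p,p)$ for all $p$. For an ultraproduct $M$ of finite structures, an internal set $D=\prod D_i/\mathcal{U}$ has nonstandard cardinality $|D|=(|D_i|)/\mathcal{U}\in\mathbb{R}^*$; for an internal set $X$ and a definable set $A$, $\pmb{\delta}_X(A)=\mathrm{st}(\log|A|/\log|X|)$ (standard part); $\pmb{\delta}_F$ is $\pmb{\delta}_X$ with $X=F$. *)

theory Defs
  imports Complex_Main "HOL-Computational_Algebra.Primes" "HOL-Algebra.Ring"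
begin

datatype trm = V nat | Zr | On | Ad trm trm | Ng trm | Ml trm trm | Sg trm

datatype fm = Eq trm trm | Neg fm | Conj fm fm | Ex nat fm

text \<open>Length of a formula: every symbol counts 1; the variable with index i
  is written with i+1 symbols (so that there are only finitely many formulas of
  bounded length).\<close>

fun tsize :: "trm \<Rightarrow> nat" where
  "tsize (V i) = i + 1"
| "tsize Zr = 1"
| "tsize On = 1"
| "tsize (Ad s t) = 1 + tsize s + tsize t"
| "tsize (Ng t) = 1 + tsize t"
| "tsize (Ml s t) = 1 + tsize s + tsize t"
| "tsize (Sg t) = 1 + tsize t"

fun fsize :: "fm \<Rightarrow> nat" where
  "fsize (Eq s t) = 1 + tsize s + tsize t"
| "fsize (Neg f) = 1 + fsize f"
| "fsize (Conj f g) = 1 + fsize f + fsize g"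
| "fsize (Ex i f) = 1 + (i + 1) + fsize f"

fun tvars :: "trm \<Rightarrow> nat set" where
  "tvars (V i) = {i}"
| "tvars Zr = {}"
| "tvars On = {}"
| "tvars (Ad s t) = tvars s \<union> tvars t"
| "tvars (Ng t) = tvars t"
| "tvars (Ml s t) = tvars s \<union> tvars t"
| "tvars (Sg t) = tvars t"

fun fv :: "fm \<Rightarrow> nat set" where
  "fv (Eq s t) = tvars s \<union> tvars t"
| "fv (Neg f) = fv f"
| "fv (Conj f g) = fv f \<union> fv g"
| "fv (Ex i f) = fv f - {i}"

fun tsigfree :: "trm \<Rightarrow> bool" where
  "tsigfree (V i) = True"
| "tsigfree Zr = True"
| "tsigfree On = True"
| "tsigfree (Ad s t) = (tsigfree s \<and> tsigfree t)"
| "tsigfree (Ng t) = tsigfree t"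
| "tsigfree (Ml s t) = (tsigfree s \<and> tsigfree t)"
| "tsigfree (Sg t) = False"

fun sigfree :: "fm \<Rightarrow> bool" where
  "sigfree (Eq s t) = (tsigfree s \<and> tsigfree t)"
| "sigfree (Neg f) = sigfree f"
| "sigfree (Conj f g) = (sigfree f \<and> sigfree g)"
| "sigfree (Ex i f) = sigfree f"

fun tpow :: "trm \<Rightarrow> nat \<Rightarrow> trm" where
  "tpow t 0 = On"
| "tpow t (Suc k) = Ml t (tpow t k)"

fun ttr :: "nat \<Rightarrow> trm \<Rightarrow> trm" where
  "ttr p (V i) = V i"
| "ttr p Zr = Zr"
| "ttr p On = On"
| "ttr p (Ad s t) = Ad (ttr p s) (ttr p t)"
| "ttr p (Ng t) = Ng (ttr p t)"
| "ttr p (Ml s t) = Ml (ttr p s) (ttr p t)"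
| "ttr p (Sg t) = tpow (ttr p t) p"

fun ftr :: "nat \<Rightarrow> fm \<Rightarrow> fm" where
  "ftr p (Eq s t) = Eq (ttr p s) (ttr p t)"
| "ftr p (Neg f) = Neg (ftr p f)"
| "ftr p (Conj f g) = Conj (ftr p f) (ftr p g)"
| "ftr p (Ex i f) = Ex i (ftr p f)"

record 'a Lstr =
  L_dom :: "'a set"
  L_zero :: 'a
  L_one :: 'a
  L_add :: "'a \<Rightarrow> 'a \<Rightarrow> 'a"
  L_neg :: "'a \<Rightarrow> 'a"
  L_mul :: "'a \<Rightarrow> 'a \<Rightarrow> 'a"
  L_sg :: "'a \<Rightarrow> 'a"

fun teval :: "'a Lstr \<Rightarrow> (nat \<Rightarrow> 'a) \<Rightarrow> trm \<Rightarrow> 'a" where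
  "teval S e (V i) = e i"
| "teval S e Zr = L_zero S"
| "teval S e On = L_one S"
| "teval S e (Ad s t) = L_add S (teval S e s) (teval S e t)"
| "teval S e (Ng t) = L_neg S (teval S e t)"
| "teval S e (Ml s t) = L_mul S (teval S e s) (teval S e t)"
| "teval S e (Sg t) = L_sg S (teval S e t)"

fun sat :: "'a Lstr \<Rightarrow> (nat \<Rightarrow> 'a) \<Rightarrow> fm \<Rightarrow> bool" where
  "sat S e (Eq s t) = (teval S e s = teval S e t)"
| "sat S e (Neg f) = (\<not> sat S e f)"
| "sat S e (Conj f g) = (sat S e f \<and> sat S e g)"
| "sat S e (Ex i f) = (\<exists>x\<in>L_dom S. sat S (e(i := x)) f)"

text \<open>environment for phi(x,y): x = variables 0..n-1, y = variables n..n+m-1\<close>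
definition envl :: "'a list \<Rightarrow> 'a list \<Rightarrow> nat \<Rightarrow> 'a" where
  "envl xs as i = (if i < length xs then xs ! i else as ! (i - length xs))"

definition defset :: "'a Lstr \<Rightarrow> fm \<Rightarrow> nat \<Rightarrow> 'a list \<Rightarrow> 'a list set" where
  "defset S \<phi> n as = {xs. length xs = n \<and> set xs \<subseteq> L_dom S \<and> sat S (envl xs as) \<phi>}"

definition fstr :: "('b, 'c) ring_scheme \<Rightarrow> ('b \<Rightarrow> 'b) \<Rightarrow> 'b Lstr" where
  "fstr R s = \<lparr>L_dom = carrier R, L_zero = \<zero>\<^bsub>R\<^esub>, L_one = \<one>\<^bsub>R\<^esub>,
     L_add = (\<oplus>\<^bsub>R\<^esub>), L_neg = a_inv R, L_mul = (\<otimes>\<^bsub>R\<^esub>), L_sg = s\<rparr>"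

text \<open>Finite fields are taken with carrier in nat (every finite
  field is isomorphic to one of these).\<close>
definition cdm_constants ::
  "(fm \<Rightarrow> nat \<Rightarrow> nat \<Rightarrow> real) \<Rightarrow> (fm \<Rightarrow> nat \<Rightarrow> nat \<Rightarrow> (nat \<times> real) set) \<Rightarrow> bool" where
  "cdm_constants C D \<longleftrightarrow>
    (\<forall>\<psi> n m. sigfree \<psi> \<and> fv \<psi> \<subseteq> {..<n+m} \<longrightarrow>
       C \<psi> n m > 0 \<and> finite (D \<psi> n m) \<and> D \<psi> n m \<subseteq> {(d, \<mu>). d \<le> n \<and> \<mu> > 0} \<and>
       (\<forall>(R :: nat ring) as. field R \<and> finite (carrier R) \<and> length as = m \<and> set as \<subseteq> carrier R \<and>
          defset (fstr R id) \<psi> n as \<noteq> {} \<longrightarrow>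
          (\<exists>(d, \<mu>) \<in> D \<psi> n m.
             \<bar>real (card (defset (fstr R id) \<psi> n as)) - \<mu> * real (card (carrier R)) ^ d\<bar>
               \<le> C \<psi> n m * real (card (carrier R)) powr (real d - 1/2))))"

text \<open>N^p_phi (max of the empty set read as 0)\<close>
definition Nval :: "(fm \<Rightarrow> nat \<Rightarrow> nat \<Rightarrow> real) \<Rightarrow> (fm \<Rightarrow> nat \<Rightarrow> nat \<Rightarrow> (nat \<times> real) set)
    \<Rightarrow> fm \<Rightarrow> nat \<Rightarrow> nat \<Rightarrow> nat \<Rightarrow> real" where
  "Nval C D \<phi> n m p =
     (let \<psi> = ftr p \<phi> in
      Max ({0} \<union> (\<Union>\<mu> \<in> snd ` D \<psi> n m.
            {\<mu>, 1 / \<mu>, 2 * log (real p) (2 * C \<psi> n m / \<mu>)})))"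

text \<open>length of phi(x,y): length of the formula plus |x| + |y|\<close>
definition fbound :: "(fm \<Rightarrow> nat \<Rightarrow> nat \<Rightarrow> real) \<Rightarrow> (fm \<Rightarrow> nat \<Rightarrow> nat \<Rightarrow> (nat \<times> real) set)
    \<Rightarrow> nat \<Rightarrow> nat \<Rightarrow> real" where
  "fbound C D l p = Max ({0} \<union> {Nval C D \<phi> n m p | \<phi> n m.
       fv \<phi> \<subseteq> {..<n+m} \<and> fsize \<phi> + n + m \<le> l})"

definition nonprincipal_ultrafilter :: "nat set set \<Rightarrow> bool" where
  "nonprincipal_ultrafilter U \<longleftrightarrow>
     UNIV \<in> U \<and> {} \<notin> U \<and> (\<forall>A B. A \<in> U \<and> B \<in> U \<longrightarrow> A \<inter> B \<in> U) \<and>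
     (\<forall>A B. A \<in> U \<and> A \<subseteq> B \<longrightarrow> B \<in> U) \<and> (\<forall>A. A \<in> U \<or> - A \<in> U) \<and>
     (\<forall>A. finite A \<longrightarrow> A \<notin> U)"

definition upG :: "(nat \<Rightarrow> nat ring) \<Rightarrow> (nat \<Rightarrow> nat) set" where
  "upG R = {g. \<forall>p. prime p \<longrightarrow> g p \<in> carrier (R p)}"

definition ucls :: "nat set set \<Rightarrow> (nat \<Rightarrow> nat ring) \<Rightarrow> (nat \<Rightarrow> nat) \<Rightarrow> (nat \<Rightarrow> nat) set" where
  "ucls U R g = {h \<in> upG R. {p. g p = h p} \<in> U}"

definition urep :: "(nat \<Rightarrow> nat) set \<Rightarrow> nat \<Rightarrow> nat" where
  "urep X = (SOME g. g \<in> X)"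

definition ustr :: "nat set set \<Rightarrow> (nat \<Rightarrow> nat ring) \<Rightarrow> (nat \<Rightarrow> nat) set Lstr" where
  "ustr U R = \<lparr>L_dom = ucls U R ` upG R,
     L_zero = ucls U R (\<lambda>p. \<zero>\<^bsub>R p\<^esub>),
     L_one = ucls U R (\<lambda>p. \<one>\<^bsub>R p\<^esub>),
     L_add = (\<lambda>X Y. ucls U R (\<lambda>p. urep X p \<oplus>\<^bsub>R p\<^esub> urep Y p)),
     L_neg = (\<lambda>X. ucls U R (\<lambda>p. \<ominus>\<^bsub>R p\<^esub> urep X p)),
     L_mul = (\<lambda>X Y. ucls U R (\<lambda>p. urep X p \<otimes>\<^bsub>R p\<^esub> urep Y p)),
     L_sg = (\<lambda>X. ucls U R (\<lambda>p. urep X p [^]\<^bsub>R p\<^esub> (p::nat)))\<rparr>"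

text \<open>D = prod_p D_p / U, an internal subset of F^n\<close>
definition internal_rep :: "nat set set \<Rightarrow> (nat \<Rightarrow> nat ring) \<Rightarrow> nat \<Rightarrow>
    (nat \<Rightarrow> nat) set list set \<Rightarrow> (nat \<Rightarrow> nat list set) \<Rightarrow> bool" where
  "internal_rep U R n A Dp \<longleftrightarrow>
     (\<forall>p. prime p \<longrightarrow> Dp p \<subseteq> {xs. length xs = n \<and> set xs \<subseteq> carrier (R p)}) \<and>
     A = {xs. length xs = n \<and> set xs \<subseteq> L_dom (ustr U R) \<and>
           (\<exists>gs. length gs = n \<and> (\<forall>i<n. gs ! i \<in> xs ! i) \<and>
                 {p. map (\<lambda>g. g p) gs \<in> Dp p} \<in> U)}"

text \<open>st(r) = s for the hyperreal represented by r\<close>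
definition st_is :: "nat set set \<Rightarrow> (nat \<Rightarrow> real) \<Rightarrow> real \<Rightarrow> bool" where
  "st_is U r s \<longleftrightarrow> (\<forall>\<epsilon>>0. {p. \<bar>r p - s\<bar> < \<epsilon>} \<in> U)"

definition delta_F_is :: "nat set set \<Rightarrow> (nat \<Rightarrow> nat ring) \<Rightarrow> nat \<Rightarrow>
    (nat \<Rightarrow> nat) set list set \<Rightarrow> real \<Rightarrow> bool" where
  "delta_F_is U R n A s \<longleftrightarrow>
     (\<exists>Dp. internal_rep U R n A Dp \<and>
        st_is U (\<lambda>p. ln (real (card (Dp p))) / ln (real (card (carrier (R p))))) s)"

end

theory Submission
  imports Defs
begin
lemma teval_cong: "(\<forall>i\<in>tvars t. e i = e' i) \<Longrightarrow> teval S e t = teval S e' t"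
  by (induction t) auto

lemma sat_cong: "(\<forall>i\<in>fv f. e i = e' i) \<Longrightarrow> sat S e f = sat S e' f"
proof (induction f arbitrary: e e')
  case (Eq s t) then show ?case using teval_cong[of s e e' S] teval_cong[of t e e' S] by auto
next
  case (Neg f) then show ?case by auto
next
  case (Conj f g)
  have "sat S e f = sat S e' f" using Conj.prems by (intro Conj.IH(1)) auto
  moreover have "sat S e g = sat S e' g" using Conj.prems by (intro Conj.IH(2)) auto
  ultimately show ?case by simp
next
  case (Ex i f)
  have "\<And>x. sat S (e(i:=x)) f = sat S (e'(i:=x)) f"
    using Ex.prems by (intro Ex.IH) auto
  then show ?case by simp
qed

lemma tpow_sigfree: "tsigfree t \<Longrightarrow> tsigfree (tpow t k)"
  by (induction k) auto
lemma tpow_vars: "tvars (tpow t k) \<subseteq> tvars t"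
  by (induction k) auto
lemma ttr_sigfree: "tsigfree (ttr p t)"
  by (induction t) (auto intro: tpow_sigfree)
lemma ttr_vars: "tvars (ttr p t) \<subseteq> tvars t"
  by (induction t) (use tpow_vars in fastforce)+
lemma ftr_sigfree: "sigfree (ftr p f)"
  by (induction f) (auto simp: ttr_sigfree)
lemma ftr_vars: "fv (ftr p f) \<subseteq> fv f"
  by (induction f) (use ttr_vars in fastforce)+

lemma teval_tpow:
  assumes "ring R" "teval (fstr R s) e t \<in> carrier R"
  shows "teval (fstr R s) e (tpow t k) = teval (fstr R s) e t [^]\<^bsub>R\<^esub> k"
proof (induction k)
  case 0 then show ?case by (simp add: fstr_def)
next
  case (Suc k)
  interpret ring R by fact
  let ?S = "fstr R s"
  have "teval ?S e (tpow t (Suc k)) = teval ?S e t \<otimes>\<^bsub>R\<^esub> teval ?S e (tpow t k)"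
    by (simp add: fstr_def)
  also have "\<dots> = teval ?S e t \<otimes>\<^bsub>R\<^esub> teval ?S e t [^]\<^bsub>R\<^esub> k" using Suc by simp
  also have "\<dots> = teval ?S e t [^]\<^bsub>R\<^esub> Suc k" by (rule nat_pow_Suc2[OF assms(2), symmetric])
  finally show ?case .
qed

lemma teval_ttr:
  assumes "ring R" "\<forall>i\<in>tvars t. e i \<in> carrier R"
  shows "teval (fstr R (\<lambda>x. x [^]\<^bsub>R\<^esub> p)) e t \<in> carrier R \<and>
     teval (fstr R s0) e (ttr p t) = teval (fstr R (\<lambda>x. x [^]\<^bsub>R\<^esub> p)) e t"
  using assms(2)
proof (induction t)
  case (Sg t)
  interpret ring R by fact
  from Sg have c: "teval (fstr R s0) e (ttr p t) \<in> carrier R"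
    and eq: "teval (fstr R s0) e (ttr p t) = teval (fstr R (\<lambda>x. x [^]\<^bsub>R\<^esub> p)) e t"
    by auto
  have "teval (fstr R s0) e (ttr p (Sg t)) = teval (fstr R s0) e (ttr p t) [^]\<^bsub>R\<^esub> p"
    using teval_tpow[OF assms(1) c] by simp
  also have "\<dots> = teval (fstr R (\<lambda>x. x [^]\<^bsub>R\<^esub> p)) e (Sg t)"
    using eq by (simp add: fstr_def)
  finally show ?case using c eq by (simp add: fstr_def)
next
  case (Ad s t)
  interpret ring R by fact
  from Ad show ?case by (auto simp: fstr_def)
next
  case (Ml s t)
  interpret ring R by fact
  from Ml show ?case by (auto simp: fstr_def)
next
  case (Ng t)
  interpret ring R by fact
  from Ng show ?case by (auto simp: fstr_def)
next
  case Zr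
  interpret ring R by fact
  show ?case by (auto simp: fstr_def)
next
  case On
  interpret ring R by fact
  show ?case by (auto simp: fstr_def)
qed (auto simp: fstr_def)

lemma sat_ftr:
  assumes "ring R" "\<forall>i\<in>fv f. e i \<in> carrier R"
  shows "sat (fstr R s0) e (ftr p f) = sat (fstr R (\<lambda>x. x [^]\<^bsub>R\<^esub> p)) e f"
  using assms(2)
proof (induction f arbitrary: e)
  case (Eq s t)
  have "teval (fstr R s0) e (ttr p s) = teval (fstr R (\<lambda>x. x [^]\<^bsub>R\<^esub> p)) e s"
    using teval_ttr[OF assms(1), of s e p s0] Eq by auto
  moreover have "teval (fstr R s0) e (ttr p t) = teval (fstr R (\<lambda>x. x [^]\<^bsub>R\<^esub> p)) e t"
    using teval_ttr[OF assms(1), of t e p s0] Eq by auto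
  ultimately show ?case by simp
next
  case (Conj f g)
  have "sat (fstr R s0) e (ftr p f) = sat (fstr R (\<lambda>x. x [^]\<^bsub>R\<^esub> p)) e f"
    using Conj.prems by (intro Conj.IH(1)) auto
  moreover have "sat (fstr R s0) e (ftr p g) = sat (fstr R (\<lambda>x. x [^]\<^bsub>R\<^esub> p)) e g"
    using Conj.prems by (intro Conj.IH(2)) auto
  ultimately show ?case by simp
next
  case (Neg f) then show ?case by simp
next
  case (Ex i f)
  have dom: "L_dom (fstr R s) = carrier R" for s by (simp add: fstr_def)
  have "sat (fstr R s0) (e(i:=x)) (ftr p f) = sat (fstr R (\<lambda>x. x [^]\<^bsub>R\<^esub> p)) (e(i:=x)) f"
    if "x \<in> carrier R" for x using that Ex.prems by (intro Ex.IH) auto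
  then show ?case by (simp add: dom)
qed

lemma tsize_pos: "tsize t > 0" by (cases t) auto

lemma finite_tsize: "finite {t. tsize t \<le> l}"
proof (induction l)
  case 0
  have "\<not> tsize t \<le> 0" for t using tsize_pos[of t] by (simp only: not_le)
  then have "{t. tsize t \<le> 0} = {}" by blast
  then show ?case using finite.emptyI by (simp only:)
next
  case (Suc l)
  let ?S = "{t. tsize t \<le> l}"
  have "{t. tsize t \<le> Suc l} \<subseteq> V ` {..l} \<union> {Zr, On} \<union> case_prod Ad ` (?S \<times> ?S) \<union> Ng ` ?S
      \<union> case_prod Ml ` (?S \<times> ?S) \<union> Sg ` ?S"
  proof
    fix t assume "t \<in> {t. tsize t \<le> Suc l}"
    then show "t \<in> V ` {..l} \<union> {Zr, On} \<union> case_prod Ad ` (?S \<times> ?S) \<union> Ng ` ?S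
      \<union> case_prod Ml ` (?S \<times> ?S) \<union> Sg ` ?S"
      by (cases t) (auto intro: image_eqI[where x="(a,b)" for a b])
  qed
  moreover have "finite (V ` {..l} \<union> {Zr, On} \<union> case_prod Ad ` (?S \<times> ?S) \<union> Ng ` ?S
      \<union> case_prod Ml ` (?S \<times> ?S) \<union> Sg ` ?S)" using Suc by simp
  ultimately show ?case by (rule finite_subset)
qed

lemma fsize_pos: "fsize f > 0" by (cases f) auto

lemma finite_fsize: "finite {f. fsize f \<le> l}"
proof (induction l)
  case 0
  have "\<not> fsize t \<le> 0" for t using fsize_pos[of t] by (simp only: not_le)
  then have "{t. fsize t \<le> 0} = {}" by blast
  then show ?case using finite.emptyI by (simp only:)
next
  case (Suc l)
  let ?S = "{t. fsize t \<le> l}"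
  let ?T = "{t. tsize t \<le> l}"
  have "{t. fsize t \<le> Suc l} \<subseteq> case_prod Eq ` (?T \<times> ?T) \<union> Neg ` ?S \<union> case_prod Conj ` (?S \<times> ?S)
      \<union> case_prod Ex ` ({..l} \<times> ?S)"
  proof
    fix t assume "t \<in> {t. fsize t \<le> Suc l}"
    then show "t \<in> case_prod Eq ` (?T \<times> ?T) \<union> Neg ` ?S \<union> case_prod Conj ` (?S \<times> ?S)
      \<union> case_prod Ex ` ({..l} \<times> ?S)"
      by (cases t) (auto intro: image_eqI[where x="(a,b)" for a b])
  qed
  moreover have "finite (case_prod Eq ` (?T \<times> ?T) \<union> Neg ` ?S \<union> case_prod Conj ` (?S \<times> ?S)
      \<union> case_prod Ex ` ({..l} \<times> ?S))" using Suc finite_tsize by simp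
  ultimately show ?case by (rule finite_subset)
qed

lemma finite_fbound_set:
  "finite {Nval C D \<phi> n m p | \<phi> n m. fv \<phi> \<subseteq> {..<n+m} \<and> fsize \<phi> + n + m \<le> l}"
proof (rule finite_subset)
  show "{Nval C D \<phi> n m p | \<phi> n m. fv \<phi> \<subseteq> {..<n+m} \<and> fsize \<phi> + n + m \<le> l}
     \<subseteq> (\<lambda>(\<phi>, n, m). Nval C D \<phi> n m p) ` ({f. fsize f \<le> l} \<times> {..l} \<times> {..l})"
    by force
  show "finite ((\<lambda>(\<phi>, n, m). Nval C D \<phi> n m p) ` ({f. fsize f \<le> l} \<times> {..l} \<times> {..l}))"
    using finite_fsize by blast
qed

lemma Nval_le_fbound:
  assumes "fv \<phi> \<subseteq> {..<n+m}" "fsize \<phi> + n + m \<le> l"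
  shows "Nval C D \<phi> n m p \<le> fbound C D l p"
  unfolding fbound_def
  by (rule Max_ge) (use finite_fbound_set[of C D p l] assms in auto)

lemma le_Nval:
  assumes "finite (D (ftr p \<phi>) n m)" "(d, \<mu>) \<in> D (ftr p \<phi>) n m"
  shows "\<mu> \<le> Nval C D \<phi> n m p \<and> 1/\<mu> \<le> Nval C D \<phi> n m p \<and>
     2 * log (real p) (2 * C (ftr p \<phi>) n m / \<mu>) \<le> Nval C D \<phi> n m p"
proof -
  have fin: "finite ({0} \<union> (\<Union>\<mu> \<in> snd ` D (ftr p \<phi>) n m.
            {\<mu>, 1 / \<mu>, 2 * log (real p) (2 * C (ftr p \<phi>) n m / \<mu>)}))"
    using assms(1) by auto
  have mu: "\<mu> \<in> snd ` D (ftr p \<phi>) n m" using assms(2) by force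
  show ?thesis unfolding Nval_def Let_def
    using Max_ge[OF fin] mu by blast
qed

definition frs :: "(nat \<Rightarrow> nat ring) \<Rightarrow> nat \<Rightarrow> nat Lstr" where
  "frs R p = fstr (R p) (\<lambda>x. x [^]\<^bsub>R p\<^esub> p)"

lemma field_ring: "field F \<Longrightarrow> ring F"
  by (simp add: field_def domain_def cring_def)

locale upf =
  fixes U :: "nat set set" and R :: "nat \<Rightarrow> nat ring"
  assumes uf: "nonprincipal_ultrafilter U" and pr: "{p. prime p} \<in> U"
    and fld: "\<And>p. prime p \<Longrightarrow> field (R p)"
begin

lemma ufD: "UNIV \<in> U" "{} \<notin> U" "\<forall>A B. A \<in> U \<and> B \<in> U \<longrightarrow> A \<inter> B \<in> U"
   "\<forall>A B. A \<in> U \<and> A \<subseteq> B \<longrightarrow> B \<in> U" "\<forall>A. A \<in> U \<or> - A \<in> U"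
   "\<forall>A. finite A \<longrightarrow> A \<notin> U"
  using uf unfolding nonprincipal_ultrafilter_def by simp_all
lemma U_UNIV: "UNIV \<in> U" by (rule ufD)
lemma U_empty: "{} \<notin> U" by (rule ufD)
lemma U_int: "A \<in> U \<Longrightarrow> B \<in> U \<Longrightarrow> A \<inter> B \<in> U" using ufD(3) by simp
lemma U_mono: "A \<in> U \<Longrightarrow> A \<subseteq> B \<Longrightarrow> B \<in> U" using ufD(4) by simp
lemma U_compl: "A \<notin> U \<longleftrightarrow> - A \<in> U"
proof
  assume "A \<notin> U" then show "- A \<in> U" using ufD(5) by auto
next
  assume "- A \<in> U"
  show "A \<notin> U"
  proof
    assume "A \<in> U"
    then have "A \<inter> - A \<in> U" using \<open>- A \<in> U\<close> by (rule U_int)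
    then show False using U_empty by simp
  qed
qed
lemma U_cofinite: "finite A \<Longrightarrow> - A \<in> U"
proof -
  assume "finite A"
  then have "A \<notin> U" using ufD(6) by simp
  then show "- A \<in> U" using U_compl by simp
qed
lemma U_int2: "A \<in> U \<Longrightarrow> B \<in> U \<Longrightarrow> A \<inter> B \<subseteq> C \<Longrightarrow> C \<in> U"
  by (rule U_mono[OF U_int])
lemma U_conj: "{p. P p \<and> Q p} \<in> U \<longleftrightarrow> {p. P p} \<in> U \<and> {p. Q p} \<in> U"
proof
  assume "{p. P p \<and> Q p} \<in> U" show "{p. P p} \<in> U \<and> {p. Q p} \<in> U"
  proof (intro conjI)
    show "{p. P p} \<in> U" using \<open>{p. P p \<and> Q p} \<in> U\<close> by (rule U_mono) auto
    show "{p. Q p} \<in> U" using \<open>{p. P p \<and> Q p} \<in> U\<close> by (rule U_mono) auto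
  qed
next
  assume "{p. P p} \<in> U \<and> {p. Q p} \<in> U" then show "{p. P p \<and> Q p} \<in> U"
    using U_int[of "{p. P p}" "{p. Q p}"] by (simp add: Collect_conj_eq)
qed
lemma U_pr_cong:
  assumes "\<And>p. prime p \<Longrightarrow> P p = Q p" "{p. P p} \<in> U" shows "{p. Q p} \<in> U"
proof (rule U_int2[OF pr assms(2)])
  show "{p. prime p} \<inter> {p. P p} \<subseteq> {p. Q p}" using assms(1) by auto
qed

lemma U_partition:
  assumes "finite I" "A \<in> U" "A \<subseteq> (\<Union>i\<in>I. B i)"
  shows "\<exists>i\<in>I. B i \<in> U"
  using assms
proof (induction I arbitrary: A rule: finite_induct)
  case empty then show ?case using U_empty by auto
next
  case (insert j I)
  show ?case
  proof (cases "B j \<in> U")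
    case True then show ?thesis by blast
  next
    case False
    then have "- B j \<in> U" using U_compl by blast
    then have "A \<inter> - B j \<in> U" using insert by (intro U_int)
    moreover have "A \<inter> - B j \<subseteq> (\<Union>i\<in>I. B i)" using insert.prems by blast
    ultimately show ?thesis using insert.IH by blast
  qed
qed

lemma ringR: "prime p \<Longrightarrow> ring (R p)" using fld field_ring by blast

lemma ucls_self: "g \<in> upG R \<Longrightarrow> g \<in> ucls U R g"
  unfolding ucls_def using U_UNIV by simp

lemma ucls_eq_iff:
  assumes "a \<in> upG R" "b \<in> upG R"
  shows "ucls U R a = ucls U R b \<longleftrightarrow> {p. a p = b p} \<in> U"
proof
  assume "ucls U R a = ucls U R b"
  then have "b \<in> ucls U R a" using ucls_self[OF assms(2)] by simp
  then show "{p. a p = b p} \<in> U" unfolding ucls_def by simp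
next
  assume ab: "{p. a p = b p} \<in> U"
  have "h \<in> ucls U R a \<longleftrightarrow> h \<in> ucls U R b" for h
  proof -
    have "{p. a p = h p} \<in> U \<longleftrightarrow> {p. b p = h p} \<in> U"
    proof
      assume "{p. a p = h p} \<in> U" then show "{p. b p = h p} \<in> U"
        by (rule U_int2[OF ab]) auto
    next
      assume "{p. b p = h p} \<in> U" then show "{p. a p = h p} \<in> U"
        by (rule U_int2[OF ab]) auto
    qed
    then show "h \<in> ucls U R a \<longleftrightarrow> h \<in> ucls U R b" unfolding ucls_def by simp
  qed
  then show "ucls U R a = ucls U R b" by blast
qed

lemma urep_ucls:
  assumes "g \<in> upG R"
  shows "urep (ucls U R g) \<in> upG R \<and> {p. urep (ucls U R g) p = g p} \<in> U"
proof -
  have "urep (ucls U R g) \<in> ucls U R g"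
    unfolding urep_def using someI[of "\<lambda>h. h \<in> ucls U R g", OF ucls_self[OF assms]] .
  then have "urep (ucls U R g) \<in> upG R \<and> {p. g p = urep (ucls U R g) p} \<in> U"
    unfolding ucls_def by simp
  then show ?thesis by (simp add: eq_commute)
qed

lemma dom_ustr: "L_dom (ustr U R) = ucls U R ` upG R" by (simp add: ustr_def)

lemma mem_dom:
  assumes "X \<in> L_dom (ustr U R)" "h \<in> X"
  shows "h \<in> upG R \<and> ucls U R h = X"
proof -
  obtain g where g: "g \<in> upG R" "X = ucls U R g" using assms(1) dom_ustr by auto
  then have h: "h \<in> upG R" "{p. g p = h p} \<in> U" using assms(2) unfolding ucls_def by auto
  have "ucls U R g = ucls U R h" using ucls_eq_iff[OF g(1) h(1)] h(2) by simp
  then show ?thesis using h g by simp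
qed

lemma urep_dom: assumes "X \<in> L_dom (ustr U R)" shows "urep X \<in> X"
proof -
  obtain g where g: "g \<in> upG R" "X = ucls U R g" using assms dom_ustr by auto
  show ?thesis unfolding urep_def using someI[of "\<lambda>h. h \<in> X", of g] ucls_self[OF g(1)] g(2) by simp
qed

lemma ucls_bin:
  assumes "a \<in> upG R" "b \<in> upG R"
    "\<And>p x y. prime p \<Longrightarrow> x \<in> carrier (R p) \<Longrightarrow> y \<in> carrier (R p) \<Longrightarrow> f p x y \<in> carrier (R p)"
  shows "(\<lambda>p. f p (a p) (b p)) \<in> upG R \<and>
    ucls U R (\<lambda>p. f p (urep (ucls U R a) p) (urep (ucls U R b) p)) = ucls U R (\<lambda>p. f p (a p) (b p))"
proof -
  have ua: "urep (ucls U R a) \<in> upG R" "{p. urep (ucls U R a) p = a p} \<in> U" using urep_ucls assms by auto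
  have ub: "urep (ucls U R b) \<in> upG R" "{p. urep (ucls U R b) p = b p} \<in> U" using urep_ucls assms by auto
  have m1: "(\<lambda>p. f p (a p) (b p)) \<in> upG R" using assms unfolding upG_def by auto
  have m2: "(\<lambda>p. f p (urep (ucls U R a) p) (urep (ucls U R b) p)) \<in> upG R"
    using assms ua ub unfolding upG_def by auto
  have "{p. f p (urep (ucls U R a) p) (urep (ucls U R b) p) = f p (a p) (b p)} \<in> U"
    by (rule U_int2[OF ua(2) ub(2)]) auto
  then show ?thesis using m1 m2 ucls_eq_iff by blast
qed

lemma ucls_un:
  assumes "a \<in> upG R"
    "\<And>p x. prime p \<Longrightarrow> x \<in> carrier (R p) \<Longrightarrow> f p x \<in> carrier (R p)"
  shows "(\<lambda>p. f p (a p)) \<in> upG R \<and>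
    ucls U R (\<lambda>p. f p (urep (ucls U R a) p)) = ucls U R (\<lambda>p. f p (a p))"
proof -
  have ua: "urep (ucls U R a) \<in> upG R" "{p. urep (ucls U R a) p = a p} \<in> U" using urep_ucls assms by auto
  have m1: "(\<lambda>p. f p (a p)) \<in> upG R" using assms unfolding upG_def by auto
  have m2: "(\<lambda>p. f p (urep (ucls U R a) p)) \<in> upG R"
    using assms ua unfolding upG_def by auto
  have "{p. f p (urep (ucls U R a) p) = f p (a p)} \<in> U"
    by (rule U_mono[OF ua(2)]) auto
  then show ?thesis using m1 m2 ucls_eq_iff by blast
qed

lemma R_closed:
  assumes "prime p"
  shows "\<zero>\<^bsub>R p\<^esub> \<in> carrier (R p)" "\<one>\<^bsub>R p\<^esub> \<in> carrier (R p)"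
    "x \<in> carrier (R p) \<Longrightarrow> y \<in> carrier (R p) \<Longrightarrow> x \<oplus>\<^bsub>R p\<^esub> y \<in> carrier (R p)"
    "x \<in> carrier (R p) \<Longrightarrow> y \<in> carrier (R p) \<Longrightarrow> x \<otimes>\<^bsub>R p\<^esub> y \<in> carrier (R p)"
    "x \<in> carrier (R p) \<Longrightarrow> \<ominus>\<^bsub>R p\<^esub> x \<in> carrier (R p)"
    "x \<in> carrier (R p) \<Longrightarrow> x [^]\<^bsub>R p\<^esub> (n::nat) \<in> carrier (R p)"
proof -
  interpret ring "R p" using ringR[OF assms] .
  show "\<zero>\<^bsub>R p\<^esub> \<in> carrier (R p)" "\<one>\<^bsub>R p\<^esub> \<in> carrier (R p)" by simp_all
  show "x \<in> carrier (R p) \<Longrightarrow> y \<in> carrier (R p) \<Longrightarrow> x \<oplus>\<^bsub>R p\<^esub> y \<in> carrier (R p)" by simp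
  show "x \<in> carrier (R p) \<Longrightarrow> y \<in> carrier (R p) \<Longrightarrow> x \<otimes>\<^bsub>R p\<^esub> y \<in> carrier (R p)" by simp
  show "x \<in> carrier (R p) \<Longrightarrow> \<ominus>\<^bsub>R p\<^esub> x \<in> carrier (R p)" by simp
  show "x \<in> carrier (R p) \<Longrightarrow> x [^]\<^bsub>R p\<^esub> (n::nat) \<in> carrier (R p)" by simp
qed

lemma teval_los:
  assumes "\<forall>i\<in>tvars t. G i \<in> upG R"
  shows "(\<lambda>p. teval (frs R p) (\<lambda>i. G i p) t) \<in> upG R \<and>
    teval (ustr U R) (\<lambda>i. ucls U R (G i)) t = ucls U R (\<lambda>p. teval (frs R p) (\<lambda>i. G i p) t)"
  using assms
proof (induction t)
  case (V i) then show ?case by (simp add: frs_def fstr_def)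
next
  case Zr
  have "(\<lambda>p. \<zero>\<^bsub>R p\<^esub>) \<in> upG R" unfolding upG_def using R_closed(1) by blast
  then show ?case by (simp add: frs_def fstr_def ustr_def)
next
  case On
  have "(\<lambda>p. \<one>\<^bsub>R p\<^esub>) \<in> upG R" unfolding upG_def using R_closed(2) by blast
  then show ?case by (simp add: frs_def fstr_def ustr_def)
next
  case (Ad s t)
  let ?a = "\<lambda>p. teval (frs R p) (\<lambda>i. G i p) s"
  let ?b = "\<lambda>p. teval (frs R p) (\<lambda>i. G i p) t"
  have A: "?a \<in> upG R" "teval (ustr U R) (\<lambda>i. ucls U R (G i)) s = ucls U R ?a" using Ad by auto
  have B: "?b \<in> upG R" "teval (ustr U R) (\<lambda>i. ucls U R (G i)) t = ucls U R ?b" using Ad by auto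
  have "\<And>p x y. prime p \<Longrightarrow> x \<in> carrier (R p) \<Longrightarrow> y \<in> carrier (R p) \<Longrightarrow> x \<oplus>\<^bsub>R p\<^esub> y \<in> carrier (R p)"
    by (rule R_closed(3))
  from ucls_bin[OF A(1) B(1), of "\<lambda>p x y. x \<oplus>\<^bsub>R p\<^esub> y", OF this]
  show ?case using A B by (simp add: frs_def fstr_def ustr_def)
next
  case (Ml s t)
  let ?a = "\<lambda>p. teval (frs R p) (\<lambda>i. G i p) s"
  let ?b = "\<lambda>p. teval (frs R p) (\<lambda>i. G i p) t"
  have A: "?a \<in> upG R" "teval (ustr U R) (\<lambda>i. ucls U R (G i)) s = ucls U R ?a" using Ml by auto
  have B: "?b \<in> upG R" "teval (ustr U R) (\<lambda>i. ucls U R (G i)) t = ucls U R ?b" using Ml by auto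
  have "\<And>p x y. prime p \<Longrightarrow> x \<in> carrier (R p) \<Longrightarrow> y \<in> carrier (R p) \<Longrightarrow> x \<otimes>\<^bsub>R p\<^esub> y \<in> carrier (R p)"
    by (rule R_closed(4))
  from ucls_bin[OF A(1) B(1), of "\<lambda>p x y. x \<otimes>\<^bsub>R p\<^esub> y", OF this]
  show ?case using A B by (simp add: frs_def fstr_def ustr_def)
next
  case (Ng t)
  let ?a = "\<lambda>p. teval (frs R p) (\<lambda>i. G i p) t"
  have A: "?a \<in> upG R" "teval (ustr U R) (\<lambda>i. ucls U R (G i)) t = ucls U R ?a" using Ng by auto
  have "\<And>p x. prime p \<Longrightarrow> x \<in> carrier (R p) \<Longrightarrow> \<ominus>\<^bsub>R p\<^esub> x \<in> carrier (R p)"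
    by (rule R_closed(5))
  from ucls_un[OF A(1), of "\<lambda>p x. \<ominus>\<^bsub>R p\<^esub> x", OF this]
  show ?case using A by (simp add: frs_def fstr_def ustr_def)
next
  case (Sg t)
  let ?a = "\<lambda>p. teval (frs R p) (\<lambda>i. G i p) t"
  have A: "?a \<in> upG R" "teval (ustr U R) (\<lambda>i. ucls U R (G i)) t = ucls U R ?a" using Sg by auto
  have "\<And>p x. prime p \<Longrightarrow> x \<in> carrier (R p) \<Longrightarrow> x [^]\<^bsub>R p\<^esub> p \<in> carrier (R p)"
    by (rule R_closed(6))
  from ucls_un[OF A(1), of "\<lambda>p x. x [^]\<^bsub>R p\<^esub> p", OF this]
  show ?case using A by (simp add: frs_def fstr_def ustr_def)
qed

end

context upf begin

lemma los:
  assumes "\<forall>i\<in>fv \<phi>. G i \<in> upG R"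
  shows "sat (ustr U R) (\<lambda>i. ucls U R (G i)) \<phi> \<longleftrightarrow> {p. sat (frs R p) (\<lambda>i. G i p) \<phi>} \<in> U"
  using assms
proof (induction \<phi> arbitrary: G)
  case (Eq s t)
  let ?a = "\<lambda>p. teval (frs R p) (\<lambda>i. G i p) s"
  let ?b = "\<lambda>p. teval (frs R p) (\<lambda>i. G i p) t"
  have A: "?a \<in> upG R" "teval (ustr U R) (\<lambda>i. ucls U R (G i)) s = ucls U R ?a"
    using teval_los[of s G] Eq.prems by auto
  have B: "?b \<in> upG R" "teval (ustr U R) (\<lambda>i. ucls U R (G i)) t = ucls U R ?b"
    using teval_los[of t G] Eq.prems by auto
  have "sat (ustr U R) (\<lambda>i. ucls U R (G i)) (Eq s t) \<longleftrightarrow> ucls U R ?a = ucls U R ?b"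
    using A B by simp
  also have "\<dots> \<longleftrightarrow> {p. ?a p = ?b p} \<in> U" by (rule ucls_eq_iff[OF A(1) B(1)])
  finally show ?case by simp
next
  case (Neg f)
  have ih: "sat (ustr U R) (\<lambda>i. ucls U R (G i)) f \<longleftrightarrow> {p. sat (frs R p) (\<lambda>i. G i p) f} \<in> U"
    using Neg by simp
  have c: "- {p. sat (frs R p) (\<lambda>i. G i p) f} = {p. \<not> sat (frs R p) (\<lambda>i. G i p) f}" by auto
  show ?case using ih U_compl[of "{p. sat (frs R p) (\<lambda>i. G i p) f}"] c by simp
next
  case (Conj f g)
  have ih1: "sat (ustr U R) (\<lambda>i. ucls U R (G i)) f \<longleftrightarrow> {p. sat (frs R p) (\<lambda>i. G i p) f} \<in> U"
    using Conj.prems by (intro Conj.IH(1)) auto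
  have ih2: "sat (ustr U R) (\<lambda>i. ucls U R (G i)) g \<longleftrightarrow> {p. sat (frs R p) (\<lambda>i. G i p) g} \<in> U"
    using Conj.prems by (intro Conj.IH(2)) auto
  show ?case using ih1 ih2 U_conj[of "\<lambda>p. sat (frs R p) (\<lambda>i. G i p) f" "\<lambda>p. sat (frs R p) (\<lambda>i. G i p) g"]
    by simp
next
  case (Ex i f)
  let ?e = "\<lambda>i. ucls U R (G i)"
  have L: "sat (ustr U R) ?e (Ex i f) \<longleftrightarrow>
     (\<exists>g\<in>upG R. {p. sat (frs R p) ((\<lambda>j. G j p)(i := g p)) f} \<in> U)"
  proof -
    have "sat (ustr U R) ?e (Ex i f) \<longleftrightarrow> (\<exists>g\<in>upG R. sat (ustr U R) (?e(i := ucls U R g)) f)"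
      by (auto simp: dom_ustr)
    also have "\<dots> \<longleftrightarrow> (\<exists>g\<in>upG R. {p. sat (frs R p) ((\<lambda>j. G j p)(i := g p)) f} \<in> U)"
    proof (rule bex_cong[OF refl])
      fix g assume g: "g \<in> upG R"
      have e: "?e(i := ucls U R g) = (\<lambda>j. ucls U R ((G(i:=g)) j))" by (rule ext) simp
      have "\<forall>j\<in>fv f. (G(i:=g)) j \<in> upG R" using Ex.prems g by auto
      then have "sat (ustr U R) (\<lambda>j. ucls U R ((G(i:=g)) j)) f \<longleftrightarrow>
          {p. sat (frs R p) (\<lambda>j. (G(i:=g)) j p) f} \<in> U" by (rule Ex.IH)
      moreover have "(\<lambda>j. (G(i:=g)) j p) = (\<lambda>j. G j p)(i := g p)" for p by auto
      ultimately show "sat (ustr U R) (?e(i := ucls U R g)) f \<longleftrightarrow>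
          {p. sat (frs R p) ((\<lambda>j. G j p)(i := g p)) f} \<in> U" using e by simp
    qed
    finally show ?thesis .
  qed
  have dom: "L_dom (frs R p) = carrier (R p)" for p by (simp add: frs_def fstr_def)
  show ?case
  proof
    assume "sat (ustr U R) ?e (Ex i f)"
    then obtain g where g: "g \<in> upG R" "{p. sat (frs R p) ((\<lambda>j. G j p)(i := g p)) f} \<in> U"
      using L by blast
    show "{p. sat (frs R p) (\<lambda>i. G i p) (Ex i f)} \<in> U"
    proof (rule U_int2[OF pr g(2)])
      show "{p. prime p} \<inter> {p. sat (frs R p) ((\<lambda>j. G j p)(i := g p)) f}
          \<subseteq> {p. sat (frs R p) (\<lambda>i. G i p) (Ex i f)}"
        using g(1) by (auto simp: upG_def dom)
    qed
  next
    assume H: "{p. sat (frs R p) (\<lambda>i. G i p) (Ex i f)} \<in> U"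
    define W where "W p = (\<exists>x. x \<in> carrier (R p) \<and> sat (frs R p) ((\<lambda>j. G j p)(i := x)) f)" for p
    define g where "g p = (if W p then (SOME x. x \<in> carrier (R p) \<and> sat (frs R p) ((\<lambda>j. G j p)(i := x)) f)
       else \<zero>\<^bsub>R p\<^esub>)" for p
    have gW: "g p \<in> carrier (R p) \<and> sat (frs R p) ((\<lambda>j. G j p)(i := g p)) f" if "W p" for p
    proof -
      have "\<exists>x. x \<in> carrier (R p) \<and> sat (frs R p) ((\<lambda>j. G j p)(i := x)) f" using that W_def by simp
      then have "(SOME x. x \<in> carrier (R p) \<and> sat (frs R p) ((\<lambda>j. G j p)(i := x)) f) \<in> carrier (R p) \<and>
         sat (frs R p) ((\<lambda>j. G j p)(i := (SOME x. x \<in> carrier (R p) \<and> sat (frs R p) ((\<lambda>j. G j p)(i := x)) f))) f"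
        by (rule someI_ex)
      then show ?thesis using that by (simp add: g_def)
    qed
    have "g \<in> upG R" unfolding upG_def
    proof (intro CollectI allI impI)
      fix p :: nat assume "prime p"
      show "g p \<in> carrier (R p)"
      proof (cases "W p")
        case True then show ?thesis using gW by blast
      next
        case False then show ?thesis using R_closed(1)[OF \<open>prime p\<close>] by (simp add: g_def)
      qed
    qed
    moreover have "{p. sat (frs R p) ((\<lambda>j. G j p)(i := g p)) f} \<in> U"
    proof (rule U_mono[OF H])
      show "{p. sat (frs R p) (\<lambda>i. G i p) (Ex i f)} \<subseteq> {p. sat (frs R p) ((\<lambda>j. G j p)(i := g p)) f}"
      proof
        fix p assume "p \<in> {p. sat (frs R p) (\<lambda>i. G i p) (Ex i f)}"
        then have "W p" by (auto simp: W_def dom)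
        then show "p \<in> {p. sat (frs R p) ((\<lambda>j. G j p)(i := g p)) f}" using gW by blast
      qed
    qed
    ultimately show "sat (ustr U R) ?e (Ex i f)" using L by blast
  qed
qed

end

lemma est:
  fixes p k d :: nat and c C \<mu> :: real
  assumes p: "p \<ge> 2" and mu: "\<mu> > 0" "\<mu> \<le> k" "1/\<mu> \<le> k" and lg: "2 * log p (2*C/\<mu>) \<le> k"
    and C: "C > 0"
    and bd: "\<bar>c - \<mu> * real (p^k) ^ d\<bar> \<le> C * real (p^k) powr (real d - 1/2)"
  shows "\<bar>ln c / ln (real (p^k)) - d\<bar> \<le> 2 / ln p"
proof -
  have k1: "k \<ge> 1" using mu by (cases k) auto
  define Q where "Q = real (p^k)"
  have p1: "real p > 1" using p by simp
  have Qp: "Q = real p powr real k" unfolding Q_def using p1 by (simp add: powr_realpow)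
  have "p \<le> p^k" using k1 p by (intro self_le_power) auto
  then have Q1: "Q > 1" unfolding Q_def using p by linarith
  have Qd: "Q powr (real d - 1/2) = Q ^ d / Q powr (1/2)"
    using Q1 by (simp add: powr_diff powr_realpow)
  have sq: "Q powr (1/2) = real p powr (real k / 2)" unfolding Qp by (simp add: powr_powr)
  have "log p (2*C/\<mu>) \<le> real k / 2" using lg by simp
  then have "real p powr (log p (2*C/\<mu>)) \<le> real p powr (real k / 2)"
    using p1 by (intro powr_mono) auto
  moreover have "real p powr (log p (2*C/\<mu>)) = 2*C/\<mu>" using p1 mu C by simp
  ultimately have "2*C/\<mu> \<le> Q powr (1/2)" using sq by simp
  moreover have Qh: "Q powr (1/2) > 0" using Q1 by simp
  ultimately have "C / Q powr (1/2) \<le> \<mu> / 2" using mu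
    by (simp add: field_simps)
  then have "(C / Q powr (1/2)) * Q^d \<le> (\<mu> / 2) * Q^d"
    using Q1 by (intro mult_right_mono) auto
  then have "C * Q powr (real d - 1/2) \<le> \<mu> * Q^d / 2"
    unfolding Qd by simp
  then have b2: "\<bar>c - \<mu> * Q^d\<bar> \<le> \<mu> * Q^d / 2" using bd unfolding Q_def by simp
  have Qdp: "Q^d > 0" using Q1 by simp
  define r where "r = c / Q^d"
  have c1: "\<mu> * Q^d / 2 \<le> c" using b2 unfolding abs_le_iff by linarith
  have c2: "c \<le> 3 * \<mu> * Q^d / 2" using b2 unfolding abs_le_iff by linarith
  have "\<mu>/2 = (\<mu> * Q^d / 2) / Q^d" using Qdp Q1 by (simp add: field_simps)
  also have "\<dots> \<le> c / Q^d" using c1 Qdp by (intro divide_right_mono) auto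
  finally have r1: "r \<ge> \<mu>/2" unfolding r_def .
  have "r \<le> (3 * \<mu> * Q^d / 2) / Q^d" unfolding r_def using c2 Qdp by (intro divide_right_mono) auto
  also have "\<dots> = 3*\<mu>/2" using Qdp Q1 by (simp add: field_simps)
  finally have r2: "r \<le> 3*\<mu>/2" .
  have rpos: "r > 0" using r1 mu by simp
  have cpos: "c > 0" using rpos Qdp Q1 unfolding r_def by (simp add: zero_less_divide_iff)
  have kpos: "real k > 0" using k1 by simp
  have "1 / (2 * real k) \<le> \<mu> / 2" using mu by (simp add: field_simps)
  then have "1 / (2 * real k) \<le> r" using r1 by simp
  then have lo: "ln (1 / (2 * real k)) \<le> ln r" using kpos rpos by simp
  have "r \<le> 2 * real k" using r2 mu by simp
  then have hi: "ln r \<le> ln (2 * real k)" using kpos rpos by simp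
  have "ln (1 / (2 * real k)) = - ln (2 * real k)" using kpos by (simp add: ln_div)
  then have absr: "\<bar>ln r\<bar> \<le> ln (2 * real k)" using lo hi by simp
  have "ln (2 * real k) \<le> 2 * real k - 1" using kpos by (intro ln_le_minus_one) simp
  then have absr2: "\<bar>ln r\<bar> \<le> 2 * real k" using absr by simp
  have lnQ: "ln Q = real k * ln p" unfolding Q_def by (simp add: ln_realpow)
  have lnp: "ln (real p) > 0" using p1 by simp
  have "ln c = ln r + real d * ln Q" unfolding r_def using cpos Qdp Q1
    by (simp add: ln_div ln_realpow)
  then have "ln c / ln Q - d = ln r / ln Q" using Q1 by (simp add: field_simps)
  then have "\<bar>ln c / ln Q - d\<bar> = \<bar>ln r\<bar> / (real k * ln p)" using lnQ lnp kpos by simp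
  also have "\<dots> \<le> (2 * real k) / (real k * ln p)"
    using absr2 lnp kpos by (intro divide_right_mono) auto
  also have "\<dots> = 2 / ln p" using kpos by simp
  finally show ?thesis unfolding Q_def .
qed

context upf begin

lemma key:
  assumes fvs: "fv \<phi> \<subseteq> {..<n+m}" and params: "length as = m" "set as \<subseteq> L_dom (ustr U R)"
    and xs: "length xs = n" "set xs \<subseteq> L_dom (ustr U R)"
    and gs: "length gs = n" "\<forall>i<n. gs ! i \<in> xs ! i"
  shows "sat (ustr U R) (envl xs as) \<phi> \<longleftrightarrow>
     {p. map (\<lambda>g. g p) gs \<in> defset (frs R p) \<phi> n (map (\<lambda>X. urep X p) as)} \<in> U"
proof -
  define G where "G j = (if j < n then gs!j else urep (as!(j-n)))" for j
  have G1: "G j \<in> upG R \<and> ucls U R (G j) = envl xs as j" if "j < n+m" for j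
  proof (cases "j < n")
    case True
    then have "xs!j \<in> L_dom (ustr U R)" using xs by auto
    then show ?thesis using mem_dom[of "xs!j" "gs!j"] gs True xs by (simp add: G_def envl_def)
  next
    case False
    then have "as!(j-n) \<in> L_dom (ustr U R)" using params that by auto
    then show ?thesis using mem_dom[of "as!(j-n)"] urep_dom False xs by (simp add: G_def envl_def)
  qed
  have "sat (ustr U R) (envl xs as) \<phi> \<longleftrightarrow> sat (ustr U R) (\<lambda>j. ucls U R (G j)) \<phi>"
    using G1 fvs by (intro sat_cong) auto
  also have "\<dots> \<longleftrightarrow> {p. sat (frs R p) (\<lambda>j. G j p) \<phi>} \<in> U"
    using G1 fvs by (intro los) auto
  also have "\<dots> \<longleftrightarrow> {p. map (\<lambda>g. g p) gs \<in> defset (frs R p) \<phi> n (map (\<lambda>X. urep X p) as)} \<in> U"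
  proof -
    have eq: "sat (frs R p) (\<lambda>j. G j p) \<phi> \<longleftrightarrow>
       map (\<lambda>g. g p) gs \<in> defset (frs R p) \<phi> n (map (\<lambda>X. urep X p) as)" if "prime p" for p
    proof -
      have dom: "L_dom (frs R p) = carrier (R p)" by (simp add: frs_def fstr_def)
      have "set (map (\<lambda>g. g p) gs) \<subseteq> carrier (R p)"
      proof
        fix x assume "x \<in> set (map (\<lambda>g. g p) gs)"
        then obtain i where i: "i < n" "x = (gs ! i) p" using gs by (auto simp: in_set_conv_nth)
        then have "G i \<in> upG R" using G1 by simp
        then show "x \<in> carrier (R p)" using i that by (simp add: G_def upG_def)
      qed
      moreover have "sat (frs R p) (\<lambda>j. G j p) \<phi> \<longleftrightarrow>
          sat (frs R p) (envl (map (\<lambda>g. g p) gs) (map (\<lambda>X. urep X p) as)) \<phi>"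
        using fvs gs params by (intro sat_cong) (auto simp: G_def envl_def)
      ultimately show ?thesis using gs by (simp add: defset_def dom)
    qed
    show ?thesis
    proof
      assume "{p. sat (frs R p) (\<lambda>j. G j p) \<phi>} \<in> U" then show "{p. map (\<lambda>g. g p) gs \<in> defset (frs R p) \<phi> n (map (\<lambda>X. urep X p) as)} \<in> U"
        by (rule U_pr_cong[rotated]) (use eq in blast)
    next
      assume "{p. map (\<lambda>g. g p) gs \<in> defset (frs R p) \<phi> n (map (\<lambda>X. urep X p) as)} \<in> U"
      then show "{p. sat (frs R p) (\<lambda>j. G j p) \<phi>} \<in> U"
        by (rule U_pr_cong[rotated]) (use eq in blast)
    qed
  qed
  finally show ?thesis .
qed

end

theorem theorem2p10:
  fixes C :: "fm \<Rightarrow> nat \<Rightarrow> nat \<Rightarrow> real"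
    and D :: "fm \<Rightarrow> nat \<Rightarrow> nat \<Rightarrow> (nat \<times> real) set"
    and U :: "nat set set"
    and R :: "nat \<Rightarrow> nat ring"
    and k :: "nat \<Rightarrow> nat"
    and \<phi> :: fm and n m :: nat
    and as :: "(nat \<Rightarrow> nat) set list"
  assumes cdm: "cdm_constants C D"
    and uf: "nonprincipal_ultrafilter U" "{p. prime p} \<in> U"
    and fields: "\<forall>p. prime p \<longrightarrow> field (R p) \<and> card (carrier (R p)) = p ^ k p"
    and inS: "\<forall>p. prime p \<longrightarrow> real (k p) \<ge> fbound C D p p"
    and fvs: "fv \<phi> \<subseteq> {..<n+m}"
    and params: "length as = m" "set as \<subseteq> L_dom (ustr U R)"
    and nonempty: "defset (ustr U R) \<phi> n as \<noteq> {}"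
  shows "\<exists>z::int. delta_F_is U R n (defset (ustr U R) \<phi> n as) (real_of_int z)"
proof -
  interpret upf U R using uf fields by (intro upf.intro) auto
  define A where "A = defset (ustr U R) \<phi> n as"
  define asp where "asp p = map (\<lambda>X. urep X p) as" for p
  define Dp where "Dp p = defset (frs R p) \<phi> n (asp p)" for p
  have keyA: "sat (ustr U R) (envl xs as) \<phi> \<longleftrightarrow> {p. map (\<lambda>g. g p) gs \<in> Dp p} \<in> U"
    if "length xs = n" "set xs \<subseteq> L_dom (ustr U R)" "length gs = n" "\<forall>i<n. gs ! i \<in> xs ! i" for xs gs
    unfolding Dp_def asp_def using key[OF fvs params that] .
  have urep_nth: "\<forall>i<n. map urep xs ! i \<in> xs ! i" if "length xs = n" "set xs \<subseteq> L_dom (ustr U R)" for xs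
    using that urep_dom nth_mem by (metis nth_map subsetD)
  have IR: "internal_rep U R n A Dp"
    unfolding internal_rep_def
  proof (intro conjI allI impI)
    fix p :: nat assume "prime p"
    show "Dp p \<subseteq> {xs. length xs = n \<and> set xs \<subseteq> carrier (R p)}"
      by (auto simp: Dp_def defset_def frs_def fstr_def)
  next
    show "A = {xs. length xs = n \<and> set xs \<subseteq> L_dom (ustr U R) \<and>
           (\<exists>gs. length gs = n \<and> (\<forall>i<n. gs ! i \<in> xs ! i) \<and>
                 {p. map (\<lambda>g. g p) gs \<in> Dp p} \<in> U)}"
    proof (intro equalityI subsetI)
      fix xs assume "xs \<in> A"
      then have xs: "length xs = n" "set xs \<subseteq> L_dom (ustr U R)" "sat (ustr U R) (envl xs as) \<phi>"
        by (auto simp: A_def defset_def)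
      have "{p. map (\<lambda>g. g p) (map urep xs) \<in> Dp p} \<in> U"
        using keyA[OF xs(1,2), of "map urep xs"] xs urep_nth[OF xs(1,2)] by simp
      then show "xs \<in> {xs. length xs = n \<and> set xs \<subseteq> L_dom (ustr U R) \<and>
           (\<exists>gs. length gs = n \<and> (\<forall>i<n. gs ! i \<in> xs ! i) \<and>
                 {p. map (\<lambda>g. g p) gs \<in> Dp p} \<in> U)}"
        using xs urep_nth[OF xs(1,2)] by (intro CollectI conjI exI[of _ "map urep xs"]) auto
    next
      fix xs assume "xs \<in> {xs. length xs = n \<and> set xs \<subseteq> L_dom (ustr U R) \<and>
           (\<exists>gs. length gs = n \<and> (\<forall>i<n. gs ! i \<in> xs ! i) \<and>
                 {p. map (\<lambda>g. g p) gs \<in> Dp p} \<in> U)}"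
      then obtain gs where xs: "length xs = n" "set xs \<subseteq> L_dom (ustr U R)" and
        gs: "length gs = n" "\<forall>i<n. gs ! i \<in> xs ! i" "{p. map (\<lambda>g. g p) gs \<in> Dp p} \<in> U"
        by blast
      then have "sat (ustr U R) (envl xs as) \<phi>" using keyA[OF xs gs(1,2)] by simp
      then show "xs \<in> A" using xs by (simp add: A_def defset_def)
    qed
  qed
  obtain xs0 where xs0: "xs0 \<in> A" using nonempty A_def by auto
  then have xs0': "length xs0 = n" "set xs0 \<subseteq> L_dom (ustr U R)" "sat (ustr U R) (envl xs0 as) \<phi>"
    by (auto simp: A_def defset_def)
  define S0 where "S0 = {p. map (\<lambda>g. g p) (map urep xs0) \<in> Dp p}"
  have S0: "S0 \<in> U" unfolding S0_def
    using keyA[OF xs0'(1,2), of "map urep xs0"] xs0' urep_nth[OF xs0'(1,2)] by simp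
  define L where "L = fsize \<phi> + n + m"
  define ratio where "ratio p = ln (real (card (Dp p))) / ln (real (card (carrier (R p))))" for p
  have est_p: "\<exists>d\<le>n. \<bar>ratio p - real d\<bar> \<le> 2 / ln (real p)"
    if p: "prime p" "p \<in> S0" "L \<le> p" for p
  proof -
    define \<psi> where "\<psi> = ftr p \<phi>"
    have sf: "sigfree \<psi>" unfolding \<psi>_def by (rule ftr_sigfree)
    have fvpsi: "fv \<psi> \<subseteq> {..<n+m}" unfolding \<psi>_def using ftr_vars fvs by blast
    have fp: "field (R p)" "card (carrier (R p)) = p ^ k p" using fields p by auto
    have p2: "p \<ge> 2" using p prime_ge_2_nat by blast
    have fin: "finite (carrier (R p))" using fp(2) p2 by (intro card_ge_0_finite) simp
    have rg: "ring (R p)" using fp(1) field_ring by blast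
    have asp_c: "set (asp p) \<subseteq> carrier (R p)"
    proof
      fix x assume "x \<in> set (asp p)"
      then obtain X where X: "X \<in> set as" "x = urep X p" unfolding asp_def by auto
      then have "X \<in> L_dom (ustr U R)" using params by auto
      then have "urep X \<in> upG R" using mem_dom urep_dom by blast
      then show "x \<in> carrier (R p)" using X p by (simp add: upG_def)
    qed
    have lasp: "length (asp p) = m" using params by (simp add: asp_def)
    have Deq: "defset (fstr (R p) id) \<psi> n (asp p) = Dp p"
    proof -
      have "sat (fstr (R p) id) (envl xs (asp p)) \<psi> = sat (frs R p) (envl xs (asp p)) \<phi>"
        if "length xs = n" "set xs \<subseteq> carrier (R p)" for xs
      proof -
        have "\<forall>i\<in>fv \<phi>. envl xs (asp p) i \<in> carrier (R p)"
        proof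
          fix i assume "i \<in> fv \<phi>"
          then have "i < n + m" using fvs by auto
          then show "envl xs (asp p) i \<in> carrier (R p)"
            using that asp_c lasp by (auto simp: envl_def)
        qed
        then show ?thesis unfolding \<psi>_def frs_def by (rule sat_ftr[OF rg])
      qed
      then show ?thesis by (auto simp: defset_def Dp_def fstr_def frs_def)
    qed
    have ne: "Dp p \<noteq> {}" using p(2) unfolding S0_def by auto
    have cd: "C \<psi> n m > 0 \<and> finite (D \<psi> n m) \<and> D \<psi> n m \<subseteq> {(d, \<mu>). d \<le> n \<and> \<mu> > 0} \<and>
       (\<forall>(R :: nat ring) as. field R \<and> finite (carrier R) \<and> length as = m \<and> set as \<subseteq> carrier R \<and>
          defset (fstr R id) \<psi> n as \<noteq> {} \<longrightarrow>
          (\<exists>(d, \<mu>) \<in> D \<psi> n m.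
             \<bar>real (card (defset (fstr R id) \<psi> n as)) - \<mu> * real (card (carrier R)) ^ d\<bar>
               \<le> C \<psi> n m * real (card (carrier R)) powr (real d - 1/2)))"
      by (rule mp[OF cdm[unfolded cdm_constants_def, THEN spec[of _ \<psi>], THEN spec[of _ n], THEN spec[of _ m]]])
        (use sf fvpsi in simp)
    have ex: "\<exists>(d, \<mu>) \<in> D \<psi> n m.
             \<bar>real (card (defset (fstr (R p) id) \<psi> n (asp p))) - \<mu> * real (card (carrier (R p))) ^ d\<bar>
               \<le> C \<psi> n m * real (card (carrier (R p))) powr (real d - 1/2)"
      by (rule cd[THEN conjunct2, THEN conjunct2, THEN conjunct2, rule_format])
        (use fp(1) fin lasp asp_c ne Deq in auto)
    then obtain d \<mu> where dmu: "(d, \<mu>) \<in> D \<psi> n m"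
      "\<bar>real (card (Dp p)) - \<mu> * real (card (carrier (R p))) ^ d\<bar>
               \<le> C \<psi> n m * real (card (carrier (R p))) powr (real d - 1/2)"
      unfolding Deq by blast
    have dn: "d \<le> n" "\<mu> > 0" using cd dmu(1) by auto
    have Nv: "\<mu> \<le> Nval C D \<phi> n m p \<and> 1/\<mu> \<le> Nval C D \<phi> n m p \<and>
     2 * log (real p) (2 * C (ftr p \<phi>) n m / \<mu>) \<le> Nval C D \<phi> n m p"
      using le_Nval[where C=C and D=D and p=p and \<phi>=\<phi> and n=n and m=m and d=d and \<mu>=\<mu>] cd dmu(1) unfolding \<psi>_def by blast
    have "Nval C D \<phi> n m p \<le> fbound C D p p"
      using Nval_le_fbound[OF fvs] p(3) unfolding L_def by blast
    also have "\<dots> \<le> real (k p)" using inS p by auto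
    finally have Nk: "Nval C D \<phi> n m p \<le> real (k p)" .
    have "\<bar>ln (real (card (Dp p))) / ln (real (p ^ k p)) - real d\<bar> \<le> 2 / ln (real p)"
      using est[of p \<mu> "k p" "C \<psi> n m" "real (card (Dp p))" d] p2 dn Nv Nk cd dmu(2) fp(2)
      unfolding \<psi>_def by auto
    then show ?thesis using dn fp(2) unfolding ratio_def by auto
  qed
  define T where "T d = {p. prime p \<and> p \<in> S0 \<and> L \<le> p \<and> \<bar>ratio p - real d\<bar> \<le> 2 / ln (real p)}" for d
  have T0: "{p. prime p} \<inter> S0 \<inter> - {..<L} \<in> U"
    using U_int[OF U_int[OF pr S0] U_cofinite[of "{..<L}"]] by simp
  have "{p. prime p} \<inter> S0 \<inter> - {..<L} \<subseteq> (\<Union>d\<in>{..n}. T d)"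
  proof
    fix p assume "p \<in> {p. prime p} \<inter> S0 \<inter> - {..<L}"
    then have pp: "prime p" "p \<in> S0" "L \<le> p" by auto
    then obtain d where "d \<le> n" "\<bar>ratio p - real d\<bar> \<le> 2 / ln (real p)" using est_p by blast
    then show "p \<in> (\<Union>d\<in>{..n}. T d)" using pp unfolding T_def by blast
  qed
  then obtain d where d: "d \<le> n" "T d \<in> U" using U_partition[OF _ T0, of "{..n}" T] by auto
  have st: "st_is U ratio (real d)"
    unfolding st_is_def
  proof (intro allI impI)
    fix \<epsilon> :: real assume e: "\<epsilon> > 0"
    define N where "N = nat \<lceil>exp (2 / \<epsilon>)\<rceil>"
    have "- {..N} \<in> U" by (rule U_cofinite) simp
    then have "T d \<inter> - {..N} \<in> U" using d(2) U_int by blast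
    moreover have "T d \<inter> - {..N} \<subseteq> {p. \<bar>ratio p - real d\<bar> < \<epsilon>}"
    proof
      fix p assume pT: "p \<in> T d \<inter> - {..N}"
      then have "real p > exp (2 / \<epsilon>)" unfolding N_def by (simp add: not_le) linarith
      then have "ln (real p) > 2 / \<epsilon>"
      proof -
        assume a: "real p > exp (2 / \<epsilon>)"
        have pp: "real p > 0" using a exp_gt_zero[of "2/\<epsilon>"] by linarith
        have "ln (exp (2 / \<epsilon>)) < ln (real p)" using a pp by (subst ln_less_cancel_iff) auto
        then show ?thesis by simp
      qed
      moreover have "2 / \<epsilon> > 0" using e by simp
      ultimately have lp: "ln (real p) > 0" "2 / \<epsilon> < ln (real p)" by linarith+
      then have "2 < \<epsilon> * ln (real p)" using e by (simp add: field_simps)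
      then have "2 / ln (real p) < \<epsilon>" using lp(1) by (simp add: pos_divide_less_eq mult.commute)
      moreover have "\<bar>ratio p - real d\<bar> \<le> 2 / ln (real p)" using pT unfolding T_def by simp
      ultimately show "p \<in> {p. \<bar>ratio p - real d\<bar> < \<epsilon>}" by simp
    qed
    ultimately show "{p. \<bar>ratio p - real d\<bar> < \<epsilon>} \<in> U" by (rule U_mono)
  qed
  have "delta_F_is U R n A (real_of_int (int d))"
    unfolding delta_F_is_def using IR st unfolding ratio_def by auto
  then show ?thesis unfolding A_def by blast
qed

end
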